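(* Let $A$ be an abelian group equipped with pairwise commuting endomorphisms $\psi^k$ ($k>0$). Suppose there is a finite filtration $A=F^i\supset F^{i+1}\supset\cdots\supset F^j\supset F^{j+1}=0$ with $0\le i\le j$, by subgroups preserved by all $\psi^k$, such that $\psi^k$ acts on $F^p/F^{p+1}$ as multiplication by $k^p$. For $p\ge 0$ let $A^{(p)}=\{x\in A:\psi^kx=k^px\text{ for all }k>0\}$. Then: (i) for $i\le p\le j$, $(\prod_{q=i}^{p-1}w_{p-q})A^{(p)}\subseteq F^p$, and the induced map $\prod_{q=i}^{p-1}w_{p-q}\colon A^{(p)}\to F^p/F^{p+1}$ is a $(\prod_{q=i}^{j}w_{|p-q|})$-isomorphism; (ii) the canonical map $\bigoplus_{p=i}^jA^{(p)}\to A$ is a $(\prod_{i\le q,p\le j}w_{|p-q|})$-isomorphism.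
   Context: For $i\ge 0$: $w_0=1$; $w_i=2$ if $i$ is odd; and for $i$ positive even, $w_i$ is the denominator of $|B_{i/2}|/2i$, where $B_n$ is the $n$-th Bernoulli number. (For $i\ge1$ and $N$ large, $w_i=\gcd_{k\ge2}k^N(k^i-1)$.) For a positive integer $N$, a homomorphism of abelian groups is an $N$-isomorphism if its kernel and cokernel are both killed by $N$. *)

theory Defs
  imports Complex_Main "HOL-Library.Function_Algebras"
begin

fun bernoulli :: "nat \<Rightarrow> rat" where
  "bernoulli n = (if n = 0 then 1
     else - (1 / of_nat (n + 1)) * (\<Sum>k<n. of_nat ((n + 1) choose k) * bernoulli k))"

text \<open>The numbers w_i. For even i > 0 the paper's B_{i/2} (topologists' indexing,
  B_1 = 1/6, B_2 = 1/30, ...) is the classical |bernoulli i|.\<close>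
definition w :: "nat \<Rightarrow> nat" where
  "w i = (if i = 0 then 1 else if odd i then 2
          else nat (snd (quotient_of (\<bar>bernoulli i\<bar> / (2 * of_nat i)))))"

definition nsmul :: "nat \<Rightarrow> 'a::monoid_add \<Rightarrow> 'a" where
  "nsmul n x = (((+) x) ^^ n) 0"

definition is_subgroup :: "'a::ab_group_add set \<Rightarrow> bool" where
  "is_subgroup S \<longleftrightarrow> 0 \<in> S \<and> (\<forall>x\<in>S. \<forall>y\<in>S. x + y \<in> S) \<and> (\<forall>x\<in>S. - x \<in> S)"

text \<open>f is a homomorphism from the subgroup G to the quotient H/K (K \<subseteq> H subgroups)
  whose kernel and cokernel are killed by N.\<close>
definition N_iso :: "nat \<Rightarrow> 'a::ab_group_add set \<Rightarrow> 'b::ab_group_add set \<Rightarrow> 'b set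
                      \<Rightarrow> ('a \<Rightarrow> 'b) \<Rightarrow> bool" where
  "N_iso N G H K f \<longleftrightarrow>
     (\<forall>x\<in>G. f x \<in> H) \<and> (\<forall>x\<in>G. \<forall>y\<in>G. f (x + y) = f x + f y) \<and>
     (\<forall>x\<in>G. f x \<in> K \<longrightarrow> nsmul N x = 0) \<and>
     (\<forall>y\<in>H. \<exists>x\<in>G. nsmul N y - f x \<in> K)"

definition eigen :: "(nat \<Rightarrow> 'a \<Rightarrow> 'a::ab_group_add) \<Rightarrow> nat \<Rightarrow> 'a set" where
  "eigen \<psi> p = {x. \<forall>k>0. \<psi> k x = nsmul (k ^ p) x}"

end

theory Submission
  imports Defs "HOL-Number_Theory.Number_Theory"
begin

declare bernoulli.simps[simp del]

lemma bern0[simp]: "bernoulli 0 = 1" by (simp add: bernoulli.simps)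

lemma bern_rec: assumes "M \<ge> 2" shows "(\<Sum>k<M. of_nat (M choose k) * bernoulli k) = 0"
proof -
  obtain n where M: "M = Suc n" and n: "n > 0" using assms by (cases M) auto
  have b: "bernoulli n = - (1 / of_nat (n + 1)) * (\<Sum>k<n. of_nat ((n + 1) choose k) * bernoulli k)"
    using n by (subst bernoulli.simps) simp
  have "(\<Sum>k<M. of_nat (M choose k) * bernoulli k)
      = (\<Sum>k<n. of_nat ((n + 1) choose k) * bernoulli k) + of_nat (n+1) * bernoulli n"
    by (simp add: M)
  also have "\<dots> = 0" unfolding b by (simp add: field_simps)
  finally show ?thesis .
qed

lemma swap_tri: fixes n :: nat shows "(\<Sum>k\<le>n. \<Sum>l\<le>n-k. h k l) = (\<Sum>l\<le>n. \<Sum>k\<le>n-l. (h k l :: 'a::comm_monoid_add))"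
proof -
  have "(\<Sum>k\<le>n. \<Sum>l\<le>n-k. h k l) = (\<Sum>k\<le>n. \<Sum>l\<in>{l. l \<in> {..n} \<and> k + l \<le> n}. h k l)"
    by (intro sum.cong refl) (auto intro: sum.cong)
  also have "\<dots> = (\<Sum>l\<le>n. \<Sum>k\<in>{k. k \<in> {..n} \<and> k + l \<le> n}. h k l)"
    by (rule sum.swap_restrict) auto
  also have "\<dots> = (\<Sum>l\<le>n. \<Sum>k\<le>n-l. h k l)"
    by (intro sum.cong refl) (auto intro: sum.cong)
  finally show ?thesis .
qed

lemma binom_step: "(of_nat N + 1 :: rat) ^ M = of_nat N ^ M + (\<Sum>l<M. of_nat (M choose l) * of_nat N ^ l)"
proof -
  have "(of_nat N + 1 :: rat) ^ M = (\<Sum>l\<le>M. of_nat (M choose l) * of_nat N ^ l)"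
    by (subst binomial_ring) simp
  also have "\<dots> = of_nat N ^ M + (\<Sum>l<M. of_nat (M choose l) * of_nat N ^ l)"
    by (simp add: lessThan_Suc_atMost[symmetric])
  finally show ?thesis .
qed

lemma faul_step:
  "(\<Sum>k\<le>n. of_nat ((n+1) choose k) * bernoulli k * (of_nat N + 1) ^ (n+1-k))
   = (\<Sum>k\<le>n. of_nat ((n+1) choose k) * bernoulli k * of_nat N ^ (n+1-k)) + of_nat (n+1) * of_nat N ^ n"
proof -
  define h where "h k l = of_nat ((n+1) choose k) * bernoulli k * (of_nat ((n+1-k) choose l) * (of_nat N::rat) ^ l)" for k l
  have "(\<Sum>k\<le>n. of_nat ((n+1) choose k) * bernoulli k * (of_nat N + 1) ^ (n+1-k))
     = (\<Sum>k\<le>n. of_nat ((n+1) choose k) * bernoulli k * of_nat N ^ (n+1-k)) + (\<Sum>k\<le>n. \<Sum>l\<le>n-k. h k l)"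
  proof -
    have "\<And>k. k \<le> n \<Longrightarrow> of_nat ((n+1) choose k) * bernoulli k * (of_nat N + 1) ^ (n+1-k)
          = of_nat ((n+1) choose k) * bernoulli k * of_nat N ^ (n+1-k) + (\<Sum>l\<le>n-k. h k l)"
    proof -
      fix k assume k: "k \<le> n"
      have e: "{..<n+1-k} = {..n-k}" using k by auto
      show "of_nat ((n+1) choose k) * bernoulli k * (of_nat N + 1) ^ (n+1-k)
          = of_nat ((n+1) choose k) * bernoulli k * of_nat N ^ (n+1-k) + (\<Sum>l\<le>n-k. h k l)"
        unfolding binom_step h_def e[symmetric] by (simp add: sum_distrib_left distrib_left)
    qed
    thus ?thesis by (simp add: sum.distrib)
  qed
  also have "(\<Sum>k\<le>n. \<Sum>l\<le>n-k. h k l) = (\<Sum>l\<le>n. \<Sum>k\<le>n-l. h k l)" by (rule swap_tri)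
  also have "\<dots> = (\<Sum>l\<le>n. of_nat ((n+1) choose l) * of_nat N ^ l * (\<Sum>k<n+1-l. of_nat ((n+1-l) choose k) * bernoulli k))"
  proof (intro sum.cong refl)
    fix l assume l: "l \<in> {..n}"
    have e: "{..<n+1-l} = {..n-l}" using l by auto
    have c: "\<And>k. k \<le> n - l \<Longrightarrow> ((n+1) choose k) * ((n+1-k) choose l) = ((n+1) choose l) * ((n+1-l) choose k)"
    proof -
      fix k assume k: "k \<le> n - l"
      have "((n+1) choose (k+l)) * ((k+l) choose k) = ((n+1) choose k) * ((n+1-k) choose l)"
        using choose_mult[of k "k+l" "n+1"] k l by simp
      moreover have "((n+1) choose (k+l)) * ((k+l) choose l) = ((n+1) choose l) * ((n+1-l) choose k)"
        using choose_mult[of l "k+l" "n+1"] k l by simp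
      moreover have "((k+l) choose k) = ((k+l) choose l)" using binomial_symmetric[of k "k+l"] by simp
      ultimately show "?thesis k" by simp
    qed
    show "(\<Sum>k\<le>n-l. h k l) = of_nat ((n+1) choose l) * of_nat N ^ l * (\<Sum>k<n+1-l. of_nat ((n+1-l) choose k) * bernoulli k)"
      unfolding e sum_distrib_left
    proof (intro sum.cong refl)
      fix k assume k: "k \<in> {..n-l}"
      have "of_nat ((n+1) choose k) * (of_nat ((n+1-k) choose l) :: rat) = of_nat ((n+1) choose l) * of_nat ((n+1-l) choose k)"
        using c[of k] k by (metis atMost_iff of_nat_mult)
      note eq = this
      have "h k l = (of_nat ((n+1) choose k) * of_nat ((n+1-k) choose l)) * (bernoulli k * of_nat N ^ l)"
        unfolding h_def by (simp add: mult_ac)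
      also have "\<dots> = (of_nat ((n+1) choose l) * of_nat ((n+1-l) choose k)) * (bernoulli k * of_nat N ^ l)"
        by (simp only: eq)
      finally show "h k l = of_nat ((n+1) choose l) * of_nat N ^ l * (of_nat ((n+1-l) choose k) * bernoulli k)"
        by (simp add: mult_ac)
    qed
  qed
  also have "\<dots> = (\<Sum>l\<in>{n}. of_nat ((n+1) choose l) * of_nat N ^ l * (\<Sum>k<n+1-l. of_nat ((n+1-l) choose k) * bernoulli k))"
  proof (rule sum.mono_neutral_right)
    show "\<forall>l\<in>{..n} - {n}. of_nat ((n+1) choose l) * of_nat N ^ l * (\<Sum>k<n+1-l. of_nat ((n+1-l) choose k) * bernoulli k) = (0::rat)"
      using bern_rec by auto
  qed auto
  also have "\<dots> = of_nat (n+1) * of_nat N ^ n" by simp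
  finally show ?thesis .
qed

lemma faulhaber:
  "of_nat (n+1) * (\<Sum>a<N. of_nat a ^ n) = (\<Sum>k\<le>n. of_nat ((n+1) choose k) * bernoulli k * (of_nat N :: rat) ^ (n+1-k))"
proof (induction N)
  case 0
  show ?case by (auto intro!: sum.neutral)
next
  case (Suc N)
  have "of_nat (n+1) * (\<Sum>a<Suc N. of_nat a ^ n) = of_nat (n+1) * (\<Sum>a<N. of_nat a ^ n) + of_nat (n+1) * (of_nat N::rat) ^ n"
    by (simp add: algebra_simps)
  also have "\<dots> = (\<Sum>k\<le>n. of_nat ((n+1) choose k) * bernoulli k * (of_nat N + 1) ^ (n+1-k))"
    unfolding Suc faul_step by simp
  finally show ?case by (simp add: add.commute)
qed
lemma faulhaber2:
  "(\<Sum>a<N. (of_nat a :: rat) ^ n) = (\<Sum>k\<le>n. of_nat (n choose k) * bernoulli k * of_nat N ^ (n+1-k) / of_nat (n+1-k))"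
proof -
  have "(\<Sum>a<N. (of_nat a :: rat) ^ n) = (\<Sum>k\<le>n. of_nat ((n+1) choose k) * bernoulli k * (of_nat N :: rat) ^ (n+1-k)) / of_nat (n+1)"
    using faulhaber[of n N] by (simp add: field_simps)
  also have "\<dots> = (\<Sum>k\<le>n. of_nat (n choose k) * bernoulli k * of_nat N ^ (n+1-k) / of_nat (n+1-k))"
    unfolding sum_divide_distrib
  proof (intro sum.cong refl)
    fix k assume k: "k \<in> {..n}"
    have "(n + 1 - k) * ((n+1) choose k) = (n+1) * (n choose k)"
      using binomial_absorb_comp[of "n+1" k] by simp
    hence e: "(of_nat (n + 1 - k) :: rat) * of_nat ((n+1) choose k) = of_nat (n+1) * of_nat (n choose k)"
      by (metis of_nat_mult)
    have nz: "(of_nat (n + 1 - k) :: rat) \<noteq> 0" using k by simp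
    have n1: "(of_nat (n + 1) :: rat) \<noteq> 0" by simp
    have q: "(of_nat ((n+1) choose k) :: rat) / of_nat (n+1) = of_nat (n choose k) / of_nat (n+1-k)"
      unfolding frac_eq_eq[OF n1 nz] using e by (metis mult.commute)
    have "of_nat ((n+1) choose k) * bernoulli k * of_nat N ^ (n+1-k) / of_nat (n+1)
        = (of_nat ((n+1) choose k) / of_nat (n+1)) * (bernoulli k * of_nat N ^ (n+1-k))" by simp
    also have "\<dots> = (of_nat (n choose k) / of_nat (n+1-k)) * (bernoulli k * of_nat N ^ (n+1-k))"
      by (simp only: q)
    finally show "of_nat ((n+1) choose k) * bernoulli k * of_nat N ^ (n+1-k) / of_nat (n+1)
        = of_nat (n choose k) * bernoulli k * of_nat N ^ (n+1-k) / of_nat (n+1-k)" by simp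
  qed
  finally show ?thesis .
qed

definition pint :: "nat \<Rightarrow> rat \<Rightarrow> bool" where
  "pint p r \<longleftrightarrow> (\<exists>a b. b \<noteq> 0 \<and> \<not> int p dvd b \<and> r = of_int a / of_int b)"

context
  fixes p :: nat assumes p: "prime p"
begin

lemma pint_int: "pint p (of_int a)"
  unfolding pint_def using p by (intro exI[of _ a] exI[of _ 1]) (auto simp: prime_gt_1_nat)

lemma pint_nat: "pint p (of_nat a)"
  using pint_int[of "int a"] by simp

lemma pint_add: assumes "pint p r" "pint p s" shows "pint p (r + s)"
proof -
  obtain a b c d where r: "b \<noteq> 0" "\<not> int p dvd b" "r = of_int a / of_int b"
    and s: "d \<noteq> 0" "\<not> int p dvd d" "s = of_int c / of_int d"
    using assms unfolding pint_def by blast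
  have pp: "prime (int p)" using p by simp
  have "\<not> int p dvd b * d" using r s pp by (simp add: prime_dvd_mult_iff)
  moreover have "r + s = of_int (a * d + c * b) / of_int (b * d)" using r s by (simp add: field_simps)
  ultimately show ?thesis unfolding pint_def using r s by (intro exI[of _ "a*d+c*b"] exI[of _ "b*d"]) auto
qed

lemma pint_mult: assumes "pint p r" "pint p s" shows "pint p (r * s)"
proof -
  obtain a b c d where r: "b \<noteq> 0" "\<not> int p dvd b" "r = of_int a / of_int b"
    and s: "d \<noteq> 0" "\<not> int p dvd d" "s = of_int c / of_int d"
    using assms unfolding pint_def by blast
  have pp: "prime (int p)" using p by simp
  have "\<not> int p dvd b * d" using r s pp by (simp add: prime_dvd_mult_iff)
  moreover have "r * s = of_int (a * c) / of_int (b * d)" using r s by (simp add: field_simps)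
  ultimately show ?thesis unfolding pint_def using r s by (intro exI[of _ "a*c"] exI[of _ "b*d"]) auto
qed

lemma pint_uminus: assumes "pint p r" shows "pint p (- r)"
  using pint_mult[OF pint_int[of "-1"] assms] by simp

lemma pint_diff: assumes "pint p r" "pint p s" shows "pint p (r - s)"
  using pint_add[OF assms(1) pint_uminus[OF assms(2)]] by simp

lemma pint_sum: assumes "\<And>x. x \<in> A \<Longrightarrow> pint p (f x)" shows "pint p (\<Sum>x\<in>A. f x)"
  using assms
proof (induction A rule: infinite_finite_induct)
  case (infinite A) thus ?case using pint_nat[of 0] by simp
next
  case empty thus ?case using pint_nat[of 0] by simp
next
  case (insert x F) thus ?case by (simp add: pint_add)
qed

lemma pint_frac: assumes d: "d > 0" and v: "multiplicity p d \<le> e" shows "pint p (of_nat p ^ e / of_nat d)"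
proof -
  have "d \<noteq> 0" "\<not> is_unit p" using d p by auto
  then obtain u where u: "d = p ^ multiplicity p d * u" "\<not> p dvd u"
    using multiplicity_decompose'[of d p] by metis
  define v where "v = multiplicity p d"
  have u0: "u \<noteq> 0" using u(1) d by (metis gr_implies_not0 mult_0_right)
  have dq: "(of_nat d::rat) = of_nat p ^ v * of_nat u" using u(1) unfolding v_def by (metis of_nat_mult of_nat_power)
  have pe: "(of_nat p ^ e :: rat) = of_nat p ^ (e - v) * of_nat p ^ v" 
    using v unfolding v_def by (simp add: power_add[symmetric])
  have "(of_nat p ^ e / of_nat d :: rat) = of_nat p ^ (e - v) * of_nat p ^ v / (of_nat p ^ v * of_nat u)"
    by (simp only: dq pe)
  also have "\<dots> = of_int (int p ^ (e - v)) / of_int (int u)"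
    using p by (simp add: prime_gt_0_nat)
  finally show ?thesis unfolding pint_def using u(2) u0
    by (intro exI[of _ "int p ^ (e - v)"] exI[of _ "int u"]) auto
qed

lemma mult_bound1: assumes "d > 0" shows "multiplicity p d \<le> d - 1"
proof -
  define v where "v = multiplicity p d"
  have "p ^ v dvd d" by (simp add: v_def multiplicity_dvd)
  hence "p ^ v \<le> d" using assms by (simp add: dvd_imp_le)
  moreover have "v < 2 ^ v" by (rule less_exp)
  moreover have "2 ^ v \<le> p ^ v" using p prime_ge_2_nat power_mono by blast
  ultimately show ?thesis unfolding v_def by linarith
qed

lemma mult_bound2: assumes "d \<ge> 2" "\<not> (p = 2 \<and> d = 2)" shows "multiplicity p d \<le> d - 2"
proof (rule ccontr)
  define v where "v = multiplicity p d"
  assume "\<not> multiplicity p d \<le> d - 2"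
  hence vd: "d - 1 \<le> v" unfolding v_def by linarith
  have "p ^ v dvd d" by (simp add: v_def multiplicity_dvd)
  hence "p ^ v \<le> d" using assms by (simp add: dvd_imp_le)
  moreover have "p ^ (d - 1) \<le> p ^ v" using vd p by (meson power_increasing prime_ge_1_nat)
  ultimately have le: "p ^ (d-1) \<le> d" by linarith
  have p2: "p \<ge> 2" using p prime_ge_2_nat by blast
  show False
  proof (cases "d = 2")
    case True
    then have "p \<le> 2" using le by simp
    hence "p = 2" using p2 by linarith
    thus False using assms True by blast
  next
    case False
    then have d3: "d \<ge> 3" using assms by simp
    have a1: "d - 2 < (2::nat) ^ (d - 2)" by (rule less_exp)
    have "d - 1 = Suc (d - 2)" using d3 by simp
    hence a2: "(2::nat) ^ (d - 1) = 2 * 2 ^ (d - 2)" by simp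
    have "d < 2 ^ (d - 1)" using a1 a2 d3 by linarith
    also have "\<dots> \<le> p ^ (d-1)" using power_mono[OF p2, of "d-1"] by simp
    finally have "d < p ^ (d - 1)" .
    thus False using le by linarith
  qed
qed


lemma pint_pB: "pint p (of_nat p * bernoulli n)"
proof (induction n rule: less_induct)
  case (less n)
  define T where "T k = of_nat (n choose k) * (of_nat p * bernoulli k) * (of_nat p ^ (n-k) / of_nat (n+1-k))" for k
  have fa: "(\<Sum>a<p. (of_nat a :: rat) ^ n) = (\<Sum>k\<le>n. of_nat (n choose k) * bernoulli k * of_nat p ^ (n+1-k) / of_nat (n+1-k))"
    by (rule faulhaber2)
  also have "\<dots> = (\<Sum>k<n. T k) + of_nat p * bernoulli n"
  proof -
    have "(\<Sum>k\<le>n. of_nat (n choose k) * bernoulli k * of_nat p ^ (n+1-k) / of_nat (n+1-k))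
        = (\<Sum>k<n. of_nat (n choose k) * bernoulli k * of_nat p ^ (n+1-k) / of_nat (n+1-k)) + of_nat p * bernoulli n"
      by (simp add: lessThan_Suc_atMost[symmetric] mult.commute)
    moreover have "(\<Sum>k<n. of_nat (n choose k) * bernoulli k * of_nat p ^ (n+1-k) / of_nat (n+1-k)) = (\<Sum>k<n. T k)"
    proof (intro sum.cong refl)
      fix k assume "k \<in> {..<n}"
      hence "n + 1 - k = Suc (n - k)" by auto
      thus "of_nat (n choose k) * bernoulli k * of_nat p ^ (n+1-k) / of_nat (n+1-k) = T k"
        unfolding T_def by (simp add: field_simps)
    qed
    ultimately show ?thesis by simp
  qed
  finally have eq: "of_nat p * bernoulli n = (\<Sum>a<p. (of_nat a :: rat) ^ n) - (\<Sum>k<n. T k)" by simp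
  have "pint p (\<Sum>a<p. (of_nat a :: rat) ^ n)" using pint_nat[of "\<Sum>a<p. a ^ n"] by simp
  moreover have "pint p (\<Sum>k<n. T k)"
  proof (rule pint_sum)
    fix k assume k: "k \<in> {..<n}"
    have Bf: "pint p (of_nat p ^ (n-k) / of_nat (n+1-k))"
      using k mult_bound1[of "n+1-k"] by (intro pint_frac) auto
    have A: "pint p (of_nat p * bernoulli k)" using less k by auto
    show "pint p (T k)" unfolding T_def by (rule pint_mult[OF pint_mult[OF pint_nat A] Bf])
  qed
  ultimately show ?case unfolding eq by (rule pint_diff)
qed

lemma fermat_sum: assumes "(p - 1) dvd m" "m \<ge> 1" shows "p dvd (\<Sum>a<p. a ^ m) + 1"
proof -
  have "[(\<Sum>a<p. a ^ m) = (\<Sum>a<p. if a = 0 then 0 else 1)] (mod p)"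
  proof (rule cong_sum)
    fix a assume a: "a \<in> {..<p}"
    show "[a ^ m = (if a = 0 then 0 else 1)] (mod p)"
    proof (cases "a = 0")
      case True thus ?thesis using assms by (simp add: zero_power)
    next
      case False
      have "\<not> p dvd a"
      proof
        assume "p dvd a" hence "p \<le> a" using False by (simp add: dvd_imp_le)
        thus False using a by simp
      qed
      hence f: "[a ^ (p - 1) = 1] (mod p)" using fermat_theorem p by blast
      obtain t where t: "m = (p - 1) * t" using assms by blast
      have "[(a ^ (p - 1)) ^ t = 1 ^ t] (mod p)" by (rule cong_pow[OF f])
      thus ?thesis using False by (simp add: t power_mult)
    qed
  qed
  moreover have "(\<Sum>a<p. (if a = 0 then 0 else 1::nat)) = p - 1"
  proof -
    have "\<And>n. (\<Sum>a<Suc n. (if a = 0 then 0 else 1::nat)) = n"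
    proof -
      fix n show "(\<Sum>a<Suc n. (if a = 0 then 0 else 1::nat)) = n" by (induction n) auto
    qed
    from this[of "p - 1"] show ?thesis using p prime_gt_0_nat by simp
  qed
  ultimately have "[(\<Sum>a<p. a ^ m) = p - 1] (mod p)" by simp
  hence "[(\<Sum>a<p. a ^ m) + 1 = p - 1 + 1] (mod p)" by (rule cong_add) (rule cong_refl)
  moreover have "p - 1 + 1 = p" using p prime_gt_0_nat by simp
  ultimately have "((\<Sum>a<p. a ^ m) + 1) mod p = p mod p" unfolding cong_def by simp
  thus ?thesis by (simp add: mod_eq_0_iff_dvd)
qed

definition pdiv :: "rat \<Rightarrow> bool" where "pdiv x \<longleftrightarrow> pint p (x / of_nat p)"

lemma pdiv_sum: assumes "\<And>x. x \<in> A \<Longrightarrow> pdiv (f x)" shows "pdiv (\<Sum>x\<in>A. f x)"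
  using assms unfolding pdiv_def sum_divide_distrib by (rule pint_sum)

lemma pdiv_diff: assumes "pdiv x" "pdiv y" shows "pdiv (x - y)"
  using assms unfolding pdiv_def diff_divide_distrib by (rule pint_diff)

lemma pdiv_pint: assumes "pint p s" shows "pdiv (of_nat p * s)"
  using assms p prime_gt_0_nat unfolding pdiv_def by simp

lemma pB_cong: assumes m: "even m" "m \<ge> 2" "(p - 1) dvd m"
  shows "pdiv (of_nat p * bernoulli m + 1)"
proof -
  define T where "T k = of_nat (m choose k) * (of_nat p * bernoulli k) * (of_nat p ^ (m-k) / of_nat (m+1-k))" for k
  have fa: "(\<Sum>a<p. (of_nat a :: rat) ^ m) = (\<Sum>k\<le>m. of_nat (m choose k) * bernoulli k * of_nat p ^ (m+1-k) / of_nat (m+1-k))"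
    by (rule faulhaber2)
  also have "\<dots> = (\<Sum>k<m. T k) + of_nat p * bernoulli m"
  proof -
    have "(\<Sum>k\<le>m. of_nat (m choose k) * bernoulli k * of_nat p ^ (m+1-k) / of_nat (m+1-k))
        = (\<Sum>k<m. of_nat (m choose k) * bernoulli k * of_nat p ^ (m+1-k) / of_nat (m+1-k)) + of_nat p * bernoulli m"
      by (simp add: lessThan_Suc_atMost[symmetric] mult.commute)
    moreover have "(\<Sum>k<m. of_nat (m choose k) * bernoulli k * of_nat p ^ (m+1-k) / of_nat (m+1-k)) = (\<Sum>k<m. T k)"
    proof (intro sum.cong refl)
      fix k assume "k \<in> {..<m}"
      hence "m + 1 - k = Suc (m - k)" by auto
      thus "of_nat (m choose k) * bernoulli k * of_nat p ^ (m+1-k) / of_nat (m+1-k) = T k"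
        unfolding T_def by (simp add: field_simps)
    qed
    ultimately show ?thesis by simp
  qed
  finally have eq: "of_nat p * bernoulli m + 1 = ((\<Sum>a<p. (of_nat a :: rat) ^ m) + 1) - (\<Sum>k<m. T k)" by simp
  have "pdiv ((\<Sum>a<p. (of_nat a :: rat) ^ m) + 1)"
  proof -
    have "p dvd (\<Sum>a<p. a ^ m) + 1" using fermat_sum[OF m(3)] m(2) by simp
    then obtain t where t: "(\<Sum>a<p. a ^ m) + 1 = p * t" by (rule dvdE)
    have "(\<Sum>a<p. (of_nat a :: rat) ^ m) + 1 = of_nat ((\<Sum>a<p. a ^ m) + 1)" by simp
    also have "\<dots> = of_nat p * of_nat t" unfolding t by simp
    finally show ?thesis using pdiv_pint[OF pint_nat[of t]] by simp
  qed
  moreover have "pdiv (\<Sum>k<m. T k)"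
  proof (rule pdiv_sum)
    fix k assume k: "k \<in> {..<m}"
    show "pdiv (T k)"
    proof (cases "p = 2 \<and> k = m - 1")
      case True
      obtain h where h: "m = 2 * h" using m by blast
      have h1: "h \<ge> 1" using m h by simp
      have sym: "(2*h) choose 1 = (2*h) choose (2*h - 1)" by (rule binomial_symmetric) (use h1 in simp)
      have keq: "k = 2*h - 1" using True h by simp
      have c: "(2*h) choose k = 2*h" unfolding keq sym[symmetric] by simp
      have "m - k = 1" "m + 1 - k = 2" using True h h1 by auto
      hence "T k = of_nat 2 * (of_nat h * (of_nat p * bernoulli k))"
        unfolding T_def using c h True by simp
      thus ?thesis using True pdiv_pint[OF pint_mult[OF pint_nat pint_pB]] by simp
    next
      case False
      have d2: "m+1-k \<ge> 2" "\<not> (p = 2 \<and> m+1-k = 2)" using k False by auto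
      have "pint p (of_nat p ^ (m-k-1) / of_nat (m+1-k))"
        using mult_bound2[OF d2] k by (intro pint_frac) auto
      hence "pint p (of_nat (m choose k) * (of_nat p * bernoulli k) * (of_nat p ^ (m-k-1) / of_nat (m+1-k)))"
        by (intro pint_mult pint_nat pint_pB)
      moreover have "T k = of_nat p * (of_nat (m choose k) * (of_nat p * bernoulli k) * (of_nat p ^ (m-k-1) / of_nat (m+1-k)))"
      proof -
        have "m - k = Suc (m - k - 1)" using k by auto
        hence e: "(of_nat p::rat)^(m-k) = of_nat p * of_nat p^(m-k-1)" by (metis power_Suc)
        show ?thesis unfolding T_def e by (simp add: field_simps)
      qed
      ultimately show ?thesis by (metis pdiv_pint)
    qed
  qed
  ultimately show ?thesis unfolding eq by (rule pdiv_diff)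
qed

end


lemma not_pint_inv: assumes p: "prime p" shows "\<not> pint p (1 / of_nat p)"
proof
  assume "pint p (1 / of_nat p)"
  then obtain a b where ab: "b \<noteq> 0" "\<not> int p dvd b" "1 / of_nat p = (of_int a / of_int b :: rat)"
    unfolding pint_def by blast
  have p0: "(of_nat p :: rat) \<noteq> 0" using p prime_gt_0_nat by simp
  have "(of_int b :: rat) = of_int (int p * a)" using ab(1,3) p0 by (simp add: field_simps)
  hence "b = int p * a" by (simp only: of_int_eq_iff)
  thus False using ab(2) by simp
qed

lemma den_dvd:
  assumes p: "prime p" and m: "even m" "m \<ge> 2" "(p - 1) dvd m"
  shows "int p dvd snd (quotient_of (bernoulli m))"
proof (rule ccontr)
  obtain a b where q: "quotient_of (bernoulli m) = (a, b)" by (cases "quotient_of (bernoulli m)") auto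
  have b0: "b > 0" using quotient_of_denom_pos[OF q] .
  have B: "bernoulli m = of_int a / of_int b" using quotient_of_div[OF q] .
  assume "\<not> int p dvd snd (quotient_of (bernoulli m))"
  hence nb: "\<not> int p dvd b" using q by simp
  have pB: "pint p (bernoulli m)" unfolding pint_def using b0 nb B by (intro exI[of _ a] exI[of _ b]) auto
  have "pdiv p (of_nat p * bernoulli m + 1)" using pB_cong[OF p m] .
  hence "pint p ((of_nat p * bernoulli m + 1) / of_nat p)" unfolding pdiv_def[OF p] .
  moreover have "(of_nat p * bernoulli m + 1) / of_nat p = bernoulli m + 1 / of_nat p"
    using p prime_gt_0_nat by (simp add: field_simps)
  ultimately have "pint p (bernoulli m + 1 / of_nat p)" by simp
  hence "pint p ((bernoulli m + 1 / of_nat p) - bernoulli m)" using pB by (rule pint_diff[OF p])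
  thus False using not_pint_inv[OF p] by simp
qed


lemma w_pos: "w m > 0"
  unfolding w_def using quotient_of_denom_pos'[of "\<bar>bernoulli m\<bar> / (2 * of_nat m)"] by auto

lemma PP:
  assumes p: "prime p" and e: "e \<ge> 1" and m: "m \<ge> 1"
    and H: "\<And>k. k \<ge> 1 \<Longrightarrow> p ^ e dvd k ^ s * (k ^ m - 1)"
  shows "p ^ e dvd w m"
proof -
  have pe1: "p ^ e > 1" using one_less_power[OF prime_gt_1_nat[OF p], of e] e by simp
  have cong: "[k ^ m = 1] (mod p ^ e)" if k: "coprime k (p ^ e)" for k
  proof -
    have "k \<noteq> 0"
    proof
      assume "k = 0"
      with k have "coprime 0 (p ^ e)" by simp
      hence "p ^ e = 1" by auto
      with pe1 show False by simp
    qed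
    hence "p ^ e dvd k ^ s * (k ^ m - 1)" using H by simp
    moreover have "coprime (p ^ e) (k ^ s)" using k by (auto simp add: coprime_commute)
    ultimately have "p ^ e dvd k ^ m - 1" by (simp add: coprime_dvd_mult_right_iff)
    moreover have "k ^ m \<ge> 1" using \<open>k \<noteq> 0\<close> by simp
    ultimately show ?thesis by (simp add: cong_altdef_nat)
  qed
  have C: "Carmichael (p ^ e) dvd m"
  proof -
    obtain g where g: "g \<in> totatives (p ^ e)" "ord (p ^ e) g = Carmichael (p ^ e)"
    proof -
      have "p ^ e > 0" using p prime_gt_0_nat by simp
      from Carmichael_root_exists[OF this] show ?thesis using that by blast
    qed
    have "coprime g (p ^ e)" using g(1) by (simp add: totatives_def)
    hence "[g ^ m = 1] (mod p ^ e)" by (rule cong)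
    hence "ord (p ^ e) g dvd m" by (rule ord_divides[THEN iffD1])
    thus ?thesis using g(2) by simp
  qed
  have CF: "Carmichael (p ^ e) = (if p = 2 \<and> e > 2 then 2 ^ (e - 2) else p ^ (e - 1) * (p - 1))"
    using Carmichael_prime_power[OF p] e by simp
  show ?thesis
  proof (cases "even m")
    case False
    have "p ^ e = 2"
    proof (rule ccontr)
      assume ne: "p ^ e \<noteq> 2"
      have "2 dvd Carmichael (p ^ e)"
      proof (cases "p = 2")
        case True
        have e2: "e \<ge> 2"
        proof (rule ccontr)
          assume "\<not> e \<ge> 2"
          hence "e = 1" using e by linarith
          thus False using ne True by simp
        qed
        show ?thesis
        proof (cases "e > 2")
          case True
          hence "Carmichael (p ^ e) = 2 ^ (e - 2)" using CF \<open>p = 2\<close> by simp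
          moreover have "(2::nat) dvd 2 ^ (e - 2)" using True by (simp add: dvd_power)
          ultimately show ?thesis by simp
        next
          case False
          hence "e = 2" using e2 by linarith
          hence "Carmichael (p ^ e) = 2" using CF \<open>p = 2\<close> by simp
          thus ?thesis by simp
        qed
      next
        case False
        hence "p > 2" using prime_ge_2_nat[OF p] by simp
        hence "odd p" using prime_odd_nat[OF p] by simp
        hence ev: "even (p - 1)" using p prime_gt_0_nat by simp
        have "Carmichael (p ^ e) = p ^ (e - 1) * (p - 1)" using CF False by simp
        thus ?thesis using ev by simp
      qed
      hence "2 dvd m" using C by (rule dvd_trans)
      thus False using \<open>odd m\<close> by simp
    qed
    moreover have "w m = 2" using False m by (simp add: w_def)
    ultimately show ?thesis by simp
  next
    case True
    have m2: "m \<ge> 2" using True m by presburger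
    have pm1: "(p - 1) dvd m"
    proof (cases "p = 2")
      case True thus ?thesis by simp
    next
      case False
      hence "Carmichael (p ^ e) = p ^ (e - 1) * (p - 1)" using CF by simp
      hence "(p - 1) dvd Carmichael (p ^ e)" by simp
      thus ?thesis using C by (rule dvd_trans)
    qed
    have pe_dvd: "p ^ e dvd p * (2 * m)"
    proof (cases "p = 2 \<and> e > 2")
      case True
      hence "2 ^ (e - 2) dvd m" using C CF by simp
      hence A: "2 ^ (e - 2) * 4 dvd m * 4" by (rule mult_dvd_mono) simp
      have B: "(2::nat) ^ (e - 2) * 4 = 2 ^ e"
      proof -
        obtain t where t: "e = t + 2" using True by (metis add.commute less_imp_add_positive add_Suc_right plus_1_eq_Suc numeral_2_eq_2 less_imp_le_nat le_add_diff_inverse2)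
        show ?thesis unfolding t by (simp add: power_add)
      qed
      have "2 ^ e dvd m * 4" using A by (simp only: B)
      moreover have "p = 2" using True by simp
      ultimately show ?thesis by (simp add: mult.commute mult.left_commute)
    next
      case False
      show ?thesis
      proof (cases "p = 2")
        case True
        with False have "e \<le> 2" by simp
        hence "(2::nat) ^ e dvd 2 ^ 2" by (rule le_imp_power_dvd)
        hence "(2::nat) ^ e dvd 4" by simp
        moreover have "(4::nat) dvd 2 * (2 * m)" by simp
        ultimately show ?thesis using True by (metis dvd_trans)
      next
        case False
        hence "p ^ (e - 1) * (p - 1) dvd m" using C CF by simp
        hence "p ^ (e - 1) dvd m" by (metis dvd_mult_left)
        hence "p ^ (e - 1) dvd 2 * m" by (rule dvd_mult)
        hence A: "p * p ^ (e - 1) dvd p * (2 * m)" by (rule mult_dvd_mono[OF dvd_refl])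
        have B: "p * p ^ (e - 1) = p ^ e" using e by (cases e) auto
        show ?thesis using A by (simp only: B)
      qed
    qed
    obtain a b where q: "quotient_of (bernoulli m) = (a, b)" by (cases "quotient_of (bernoulli m)") auto
    have b0: "b > 0" using quotient_of_denom_pos[OF q] .
    have B: "bernoulli m = of_int a / of_int b" using quotient_of_div[OF q] .
    have cab: "coprime a b" using quotient_of_coprime[OF q] .
    have pb: "int p dvd b" using den_dvd[OF p True m2 pm1] q by simp
    obtain n c where qq: "quotient_of (\<bar>bernoulli m\<bar> / (2 * of_nat m)) = (n, c)"
      by (cases "quotient_of (\<bar>bernoulli m\<bar> / (2 * of_nat m))") auto
    have c0: "c > 0" using quotient_of_denom_pos[OF qq] .
    have C2: "\<bar>bernoulli m\<bar> / (2 * of_nat m) = of_int n / of_int c" using quotient_of_div[OF qq] .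
    have wm: "w m = nat c" using True m qq by (simp add: w_def)
    have absB: "\<bar>bernoulli m\<bar> = of_int \<bar>a\<bar> / of_int b" using B b0 by simp
    have "(of_int (\<bar>a\<bar> * c) :: rat) = of_int (n * (2 * int m * b))"
      using C2 unfolding absB using b0 c0 m by (simp add: field_simps)
    hence eq: "\<bar>a\<bar> * c = n * (2 * int m * b)" by (simp only: of_int_eq_iff)
    have "int (p ^ e) dvd int (p * (2 * m))" using pe_dvd by (simp only: of_nat_dvd_iff)
    hence "int (p ^ e) dvd int p * (2 * int m)" by simp
    also have "\<dots> dvd 2 * int m * b" using pb by (simp add: mult.commute mult_dvd_mono)
    also have "\<dots> dvd \<bar>a\<bar> * c" unfolding eq by simp
    finally have d1: "int (p ^ e) dvd \<bar>a\<bar> * c" .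
    have "\<not> int p dvd a"
    proof
      assume "int p dvd a"
      with pb cab have "is_unit (int p)" by (meson coprime_common_divisor)
      thus False using p by simp
    qed
    hence "coprime (int p) a" using p by (intro prime_imp_coprime) auto
    hence "coprime (int (p ^ e)) \<bar>a\<bar>" by simp
    hence "int (p ^ e) dvd c" using d1 by (simp add: coprime_dvd_mult_right_iff)
    hence "int (p ^ e) dvd int (nat c)" using c0 by simp
    hence "p ^ e dvd nat c" by (simp only: of_nat_dvd_iff)
    thus ?thesis using wm by simp
  qed
qed

lemma w_dvd:
  assumes d: "d > 0" and m: "m \<ge> 1" and H: "\<And>k. k \<ge> 1 \<Longrightarrow> d dvd k ^ s * (k ^ m - 1)"
  shows "d dvd w m"
proof (rule multiplicity_le_imp_dvd)
  show "d \<noteq> 0" using d by simp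
  fix p :: nat assume p: "prime p"
  show "multiplicity p d \<le> multiplicity p (w m)"
  proof (cases "multiplicity p d = 0")
    case True thus ?thesis by simp
  next
    case False
    have "p ^ multiplicity p d dvd d" by (rule multiplicity_dvd)
    hence "p ^ multiplicity p d dvd w m"
    proof (intro PP[OF p _ m])
      show "1 \<le> multiplicity p d" using False by simp
      fix k :: nat assume "1 \<le> k"
      thus "p ^ multiplicity p d dvd k ^ s * (k ^ m - 1)"
        using H \<open>p ^ multiplicity p d dvd d\<close> dvd_trans by blast
    qed
    moreover have "w m \<noteq> 0" using w_pos[of m] by simp
    moreover have "\<not> is_unit p" using prime_gt_1_nat[OF p] by simp
    ultimately show ?thesis using power_dvd_iff_le_multiplicity by blast
  qed
qed


definition inL :: "(nat \<Rightarrow> int) \<Rightarrow> int \<Rightarrow> bool" where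
  "inL f z \<longleftrightarrow> (\<exists>K c. z = (\<Sum>k\<in>{1..K}. c k * f k))"

lemma inL_ext: fixes f c :: "nat \<Rightarrow> int" and K K' :: nat assumes "z = (\<Sum>k\<in>{1..K}. c k * f k)" "K \<le> K'"
  shows "z = (\<Sum>k\<in>{1..K'}. (if k \<le> K then c k else 0) * f k)"
proof -
  have "(\<Sum>k\<in>{1..K'}. (if k \<le> K then c k else 0) * f k) = (\<Sum>k\<in>{1..K}. (if k \<le> K then c k else 0) * f k)"
    using assms(2) by (intro sum.mono_neutral_right) auto
  also have "\<dots> = (\<Sum>k\<in>{1..K}. c k * f k)" by (intro sum.cong) auto
  finally show ?thesis using assms(1) by simp
qed

lemma inL_add: fixes f :: "nat \<Rightarrow> int" assumes "inL f x" "inL f y" shows "inL f (x + y)"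
proof -
  obtain K1 c1 where 1: "x = (\<Sum>k\<in>{1..K1}. c1 k * f k)" using assms unfolding inL_def by blast
  obtain K2 c2 where 2: "y = (\<Sum>k\<in>{1..K2}. c2 k * f k)" using assms unfolding inL_def by blast
  define K where "K = max K1 K2"
  have "x = (\<Sum>k\<in>{1..K}. (if k \<le> K1 then c1 k else 0) * f k)" using inL_ext[OF 1] by (simp add: K_def)
  moreover have "y = (\<Sum>k\<in>{1..K}. (if k \<le> K2 then c2 k else 0) * f k)" using inL_ext[OF 2] by (simp add: K_def)
  ultimately have "x + y = (\<Sum>k\<in>{1..K}. ((if k \<le> K1 then c1 k else 0) + (if k \<le> K2 then c2 k else 0)) * f k)"
    by (simp add: sum.distrib distrib_right)
  thus ?thesis unfolding inL_def
    by (intro exI[of _ K] exI[of _ "\<lambda>k. (if k \<le> K1 then c1 k else 0) + (if k \<le> K2 then c2 k else 0)"])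
qed

lemma inL_smul: fixes f :: "nat \<Rightarrow> int" assumes "inL f x" shows "inL f (a * x)"
proof -
  obtain K c where 1: "x = (\<Sum>k\<in>{1..K}. c k * f k)" using assms unfolding inL_def by blast
  hence "a * x = (\<Sum>k\<in>{1..K}. (a * c k) * f k)" by (simp add: sum_distrib_left mult.assoc)
  thus ?thesis unfolding inL_def by (intro exI[of _ K] exI[of _ "\<lambda>k. a * c k"])
qed

lemma inL_gen: fixes f :: "nat \<Rightarrow> int" assumes "k0 \<ge> 1" shows "inL f (f k0)"
proof -
  have "(\<Sum>k\<in>{1..k0}. (if k = k0 then 1 else 0) * f k) = (\<Sum>k\<in>{1..k0}. (if k = k0 then f k0 else 0))"
    by (intro sum.cong) auto
  also have "\<dots> = f k0" using assms by (simp add: sum.delta)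
  finally show ?thesis unfolding inL_def by (intro exI[of _ k0] exI[of _ "\<lambda>k. if k = k0 then 1 else 0"]) simp
qed

lemma inL_dvd_all:
  fixes f :: "nat \<Rightarrow> int"
  assumes pos: "inL f z0" "z0 > 0"
  obtains d :: nat where "d > 0" "inL f (int d)" "\<And>z. inL f z \<Longrightarrow> int d dvd z"
proof -
  define P where "P n \<longleftrightarrow> n > 0 \<and> inL f (int n)" for n :: nat
  have "P (nat z0)" using pos by (simp add: P_def)
  hence Pd: "P (LEAST n. P n)" by (rule LeastI)
  define d where "d = (LEAST n. P n)"
  have d: "d > 0" "inL f (int d)" using Pd unfolding P_def d_def by auto
  have "int d dvd z" if z: "inL f z" for z
  proof (rule ccontr)
    assume nd: "\<not> int d dvd z"
    define r where "r = z mod int d"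
    have r: "r = z + (- (z div int d)) * int d" unfolding r_def by (simp add: minus_div_mult_eq_mod[symmetric])
    have "inL f r" unfolding r by (intro inL_add z inL_smul d(2))
    moreover have "r \<ge> 0" "r < int d" "r \<noteq> 0" using nd d(1) unfolding r_def
      by (simp_all add: dvd_eq_mod_eq_0)
    hence "r > 0" "r < int d" by simp_all
    ultimately have "P (nat r)" by (simp add: P_def)
    hence "d \<le> nat r" unfolding d_def by (rule Least_le)
    moreover have "nat r < d" using \<open>r < int d\<close> \<open>r > 0\<close> by (subst nat_less_iff) auto
    ultimately show False by simp
  qed
  thus ?thesis using that d by blast
qed

lemma w_comb: assumes m: "m \<ge> 1"
  shows "\<exists>K (c::nat \<Rightarrow> int). (\<Sum>k\<in>{1..K}. c k * (int k ^ s * (int k ^ m - 1))) = int (w m)"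
proof -
  define f where "f k = int k ^ s * (int k ^ m - 1)" for k :: nat
  have f2: "f 2 > 0" unfolding f_def using m by (simp add: one_less_power)
  obtain d where d: "d > 0" "inL f (int d)" "\<And>z. inL f z \<Longrightarrow> int d dvd z"
  proof -
    have g2: "inL f (f 2)" by (rule inL_gen) simp
    show ?thesis using inL_dvd_all[OF g2 f2] that by blast
  qed
  have "d dvd w m"
  proof (rule w_dvd[OF d(1) m])
    fix k :: nat assume k: "k \<ge> 1"
    have "int d dvd f k" using d(3)[OF inL_gen[OF k]] .
    moreover have "f k = int (k ^ s * (k ^ m - 1))" unfolding f_def using k by (simp add: of_nat_diff)
    ultimately show "d dvd k ^ s * (k ^ m - 1)" by (simp only: of_nat_dvd_iff)
  qed
  then obtain t where "w m = d * t" by blast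
  hence "int (w m) = int t * int d" by simp
  moreover have "inL f (int t * int d)" by (rule inL_smul[OF d(2)])
  ultimately show ?thesis unfolding inL_def f_def by metis
qed


lemma nsmul_0[simp]: "nsmul 0 x = 0" by (simp add: nsmul_def)
lemma nsmul_Suc: "nsmul (Suc n) x = x + nsmul n x" by (simp add: nsmul_def)
lemma nsmul_1[simp]: "nsmul 1 x = (x::'a::monoid_add)" by (simp add: nsmul_def)

lemma nsmul_add: "nsmul (m + n) x = nsmul m x + nsmul n (x::'a::monoid_add)"
  by (induction m) (simp_all add: nsmul_Suc add.assoc)

lemma nsmul_mult: "nsmul (m * n) x = nsmul m (nsmul n (x::'a::monoid_add))"
  by (induction m) (simp_all add: nsmul_Suc nsmul_add)

lemma nsmul_zero[simp]: "nsmul n (0::'a::monoid_add) = 0"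
  by (induction n) (simp_all add: nsmul_Suc)


lemma nsmul_plus': "nsmul n (x + y) = nsmul n x + nsmul n (y::'a::comm_monoid_add)"
  by (induction n) (simp_all add: nsmul_Suc algebra_simps)

lemma nsmul_uminus: "nsmul n (- x) = - nsmul n (x::'a::ab_group_add)"
  by (induction n) (simp_all add: nsmul_Suc algebra_simps)

lemma nsmul_diff: "nsmul n (x - y) = nsmul n x - nsmul n (y::'a::ab_group_add)"
  using nsmul_plus'[of n x "- y"] by (simp add: nsmul_uminus)

lemma nsmul_sum: "nsmul n (\<Sum>a\<in>A. f a) = (\<Sum>a\<in>A. nsmul n (f a :: 'a::comm_monoid_add))"
  by (induction A rule: infinite_finite_induct) (simp_all add: nsmul_plus')

lemma nsmul_sum_scalar: "nsmul (\<Sum>a\<in>A. f a) x = (\<Sum>a\<in>A. nsmul (f a) (x :: 'a::comm_monoid_add))"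
  by (induction A rule: infinite_finite_induct) (simp_all add: nsmul_add)

lemma nsmul_fun: "nsmul n (g :: 'b \<Rightarrow> 'a::monoid_add) = (\<lambda>p. nsmul n (g p))"
  by (induction n) (simp_all add: nsmul_Suc fun_eq_iff)

lemma additive_zero: fixes f :: "'a::ab_group_add \<Rightarrow> 'b::ab_group_add" assumes "\<And>x y. f (x + y) = f x + f y" shows "f 0 = 0"
  using assms[of 0 0] by simp

lemma additive_nsmul: fixes f :: "'a::ab_group_add \<Rightarrow> 'b::ab_group_add" assumes "\<And>x y. f (x + y) = f x + f y"
  shows "f (nsmul n x) = nsmul n (f x)"
  by (induction n) (simp_all add: nsmul_Suc assms additive_zero[OF assms])

lemma additive_uminus: fixes f :: "'a::ab_group_add \<Rightarrow> 'b::ab_group_add" assumes "\<And>x y. f (x + y) = f x + f y"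
  shows "f (- x) = - f x"
  using assms[of x "-x"] additive_zero[OF assms] by (simp add: eq_neg_iff_add_eq_0 add.commute)

lemma additive_diff: fixes f :: "'a::ab_group_add \<Rightarrow> 'b::ab_group_add" assumes "\<And>x y. f (x + y) = f x + f y"
  shows "f (x - y) = f x - f y"
  using assms[of x "-y"] additive_uminus[OF assms] by simp

lemma additive_sum: fixes f :: "'a::ab_group_add \<Rightarrow> 'b::ab_group_add" assumes "\<And>x y. f (x + y) = f x + f y"
  shows "f (\<Sum>a\<in>A. g a) = (\<Sum>a\<in>A. f (g a))"
  by (induction A rule: infinite_finite_induct) (simp_all add: assms additive_zero[OF assms])

definition zsmul :: "int \<Rightarrow> 'a::ab_group_add \<Rightarrow> 'a" where
  "zsmul a x = nsmul (nat a) x - nsmul (nat (- a)) x"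

lemma zsmul_repr: assumes "int m - int n = a" shows "zsmul a x = nsmul m x - nsmul n x"
proof -
  have "nat a + n = m + nat (- a)" using assms by linarith
  hence "nsmul (nat a) x + nsmul n x = nsmul m x + nsmul (nat (- a)) x" by (metis nsmul_add)
  thus ?thesis unfolding zsmul_def by (simp add: algebra_simps)
qed

lemma zsmul_int[simp]: "zsmul (int n) x = nsmul n x"
  using zsmul_repr[of n 0 "int n" x] by simp

lemma zsmul_1[simp]: "zsmul 1 x = x"
  by (simp add: zsmul_def nsmul_def)

lemma zsmul_0[simp]: "zsmul 0 x = 0" by (simp add: zsmul_def)
lemma zsmul_zero[simp]: "zsmul a 0 = 0" by (simp add: zsmul_def)

lemma zsmul_add: "zsmul (a + b) x = zsmul a x + zsmul b x"
proof -
  have "zsmul (a + b) x = nsmul (nat a + nat b) x - nsmul (nat (-a) + nat (-b)) x"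
    by (rule zsmul_repr) linarith
  thus ?thesis unfolding zsmul_def by (simp add: nsmul_add algebra_simps)
qed

lemma zsmul_uminus_scalar: "zsmul (- a) x = - zsmul a x"
  unfolding zsmul_def by simp

lemma zsmul_diff_scalar: "zsmul (a - b) x = zsmul a x - zsmul b x"
  using zsmul_add[of a "-b" x] by (simp add: zsmul_uminus_scalar)

lemma zsmul_plus: "zsmul a (x + y) = zsmul a x + zsmul a y"
  unfolding zsmul_def by (simp add: nsmul_plus' algebra_simps)

lemma zsmul_uminus: "zsmul a (- x) = - zsmul a x"
  unfolding zsmul_def by (simp add: nsmul_uminus algebra_simps)

lemma zsmul_diff: "zsmul a (x - y) = zsmul a x - zsmul a y"
  unfolding zsmul_def by (simp add: nsmul_diff algebra_simps)

lemma zsmul_nsmul: "zsmul a (nsmul n x) = zsmul (a * int n) x"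
proof -
  have "zsmul a (nsmul n x) = nsmul (nat a * n) x - nsmul (nat (-a) * n) x"
    unfolding zsmul_def by (simp only: nsmul_mult)
  also have "\<dots> = zsmul (a * int n) x"
    by (rule zsmul_repr[symmetric]) (cases "a \<ge> 0"; simp add: algebra_simps)
  finally show ?thesis .
qed

lemma zsmul_mult: "zsmul (a * b) x = zsmul a (zsmul b x)"
proof -
  have "zsmul a (zsmul b x) = zsmul a (nsmul (nat b) x) - zsmul a (nsmul (nat (-b)) x)"
    unfolding zsmul_def[of b] by (rule zsmul_diff)
  also have "\<dots> = zsmul (a * int (nat b)) x - zsmul (a * int (nat (-b))) x" by (simp add: zsmul_nsmul)
  also have "\<dots> = zsmul (a * int (nat b) - a * int (nat (-b))) x" by (simp add: zsmul_diff_scalar)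
  also have "a * int (nat b) - a * int (nat (-b)) = a * b" by (cases "b \<ge> 0") auto
  finally show ?thesis by simp
qed

lemma zsmul_sum: "zsmul a (\<Sum>k\<in>A. f k) = (\<Sum>k\<in>A. zsmul a (f k))"
  by (induction A rule: infinite_finite_induct) (simp_all add: zsmul_plus)

lemma zsmul_sum_scalar: "zsmul (\<Sum>k\<in>A. c k) x = (\<Sum>k\<in>A. zsmul (c k) x)"
  by (induction A rule: infinite_finite_induct) (simp_all add: zsmul_add)

lemma additive_zsmul: fixes f :: "'a::ab_group_add \<Rightarrow> 'b::ab_group_add" assumes "\<And>x y. f (x + y) = f x + f y"
  shows "f (zsmul a x) = zsmul a (f x)"
  unfolding zsmul_def by (simp add: additive_diff[OF assms] additive_nsmul[OF assms])

lemma subgroup_diff: "is_subgroup S \<Longrightarrow> x \<in> S \<Longrightarrow> y \<in> S \<Longrightarrow> x - y \<in> S"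
  unfolding is_subgroup_def by (metis diff_conv_add_uminus)

lemma subgroup_nsmul: "is_subgroup S \<Longrightarrow> x \<in> S \<Longrightarrow> nsmul n x \<in> S"
  unfolding is_subgroup_def by (induction n) (simp_all add: nsmul_Suc)

lemma subgroup_zsmul: "is_subgroup S \<Longrightarrow> x \<in> S \<Longrightarrow> zsmul a x \<in> S"
  unfolding zsmul_def by (intro subgroup_diff subgroup_nsmul)

lemma subgroup_sum: "is_subgroup S \<Longrightarrow> (\<And>a. a \<in> A \<Longrightarrow> f a \<in> S) \<Longrightarrow> (\<Sum>a\<in>A. f a) \<in> S"
  unfolding is_subgroup_def by (induction A rule: infinite_finite_induct) simp_all


primrec Pm :: "(nat \<Rightarrow> 'a \<Rightarrow> 'a) \<Rightarrow> nat \<Rightarrow> nat \<Rightarrow> 'a \<Rightarrow> 'a" where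
  "Pm T r 0 x = x"
| "Pm T r (Suc n) x = T (r + n) (Pm T r n x)"

locale filt =
  fixes \<psi> :: "nat \<Rightarrow> 'a::ab_group_add \<Rightarrow> 'a" and F :: "nat \<Rightarrow> 'a set" and i j :: nat
  assumes add: "\<And>k x y. k > 0 \<Longrightarrow> \<psi> k (x + y) = \<psi> k x + \<psi> k y"
    and comm: "\<And>k l x. k > 0 \<Longrightarrow> l > 0 \<Longrightarrow> \<psi> k (\<psi> l x) = \<psi> l (\<psi> k x)"
    and ij: "i \<le> j"
    and top: "F i = UNIV"
    and bot: "F (Suc j) = {0}"
    and sub: "\<And>p. i \<le> p \<Longrightarrow> p \<le> Suc j \<Longrightarrow> is_subgroup (F p)"
    and decr: "\<And>p. i \<le> p \<Longrightarrow> p \<le> j \<Longrightarrow> F (Suc p) \<subseteq> F p"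
    and pres: "\<And>p k x. i \<le> p \<Longrightarrow> p \<le> Suc j \<Longrightarrow> k > 0 \<Longrightarrow> x \<in> F p \<Longrightarrow> \<psi> k x \<in> F p"
    and act: "\<And>p k x. i \<le> p \<Longrightarrow> p \<le> j \<Longrightarrow> k > 0 \<Longrightarrow> x \<in> F p \<Longrightarrow>
                \<psi> k x - nsmul (k ^ p) x \<in> F (Suc p)"
begin

lemma psi_nsmul: "k > 0 \<Longrightarrow> \<psi> k (nsmul n x) = nsmul n (\<psi> k x)"
  by (rule additive_nsmul) (rule add)

lemma psi_zsmul: "k > 0 \<Longrightarrow> \<psi> k (zsmul a x) = zsmul a (\<psi> k x)"
  by (rule additive_zsmul) (rule add)

lemma psi_diff: "k > 0 \<Longrightarrow> \<psi> k (x - y) = \<psi> k x - \<psi> k y"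
  by (rule additive_diff) (rule add)

lemma psi_zero: "k > 0 \<Longrightarrow> \<psi> k 0 = 0"
  by (rule additive_zero) (rule add)

lemma psi_sum: "k > 0 \<Longrightarrow> \<psi> k (\<Sum>a\<in>A. g a) = (\<Sum>a\<in>A. \<psi> k (g a))"
  by (rule additive_sum) (rule add)

lemma eigen_zero: "0 \<in> eigen \<psi> p"
  unfolding eigen_def by (simp add: psi_zero)

lemma eigen_add: "x \<in> eigen \<psi> p \<Longrightarrow> y \<in> eigen \<psi> p \<Longrightarrow> x + y \<in> eigen \<psi> p"
  unfolding eigen_def by (simp add: add nsmul_plus')

lemma eigen_nsmul: "x \<in> eigen \<psi> p \<Longrightarrow> nsmul n x \<in> eigen \<psi> p"
  unfolding eigen_def by (simp add: psi_nsmul nsmul_mult[symmetric] mult.commute)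

lemma eigen_zsmul: assumes "x \<in> eigen \<psi> p" shows "zsmul a x \<in> eigen \<psi> p"
  unfolding eigen_def
proof (intro CollectI allI impI)
  fix k :: nat assume k: "k > 0"
  have "\<psi> k (zsmul a x) = zsmul a (nsmul (k ^ p) x)" using assms k by (simp add: psi_zsmul eigen_def)
  also have "\<dots> = zsmul (int (k ^ p) * a) x" by (simp add: zsmul_nsmul mult.commute)
  also have "\<dots> = nsmul (k ^ p) (zsmul a x)" by (simp only: zsmul_mult zsmul_int)
  finally show "\<psi> k (zsmul a x) = nsmul (k ^ p) (zsmul a x)" .
qed

lemma eigen_diff: "x \<in> eigen \<psi> p \<Longrightarrow> y \<in> eigen \<psi> p \<Longrightarrow> x - y \<in> eigen \<psi> p"
  unfolding eigen_def by (simp add: psi_diff nsmul_diff)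

lemma eigen_sum: "(\<And>a. a \<in> A \<Longrightarrow> g a \<in> eigen \<psi> p) \<Longrightarrow> (\<Sum>a\<in>A. g a) \<in> eigen \<psi> p"
  by (induction A rule: infinite_finite_induct) (simp_all add: eigen_zero eigen_add)

definition Op :: "nat \<Rightarrow> (nat \<Rightarrow> int) \<Rightarrow> nat \<Rightarrow> 'a \<Rightarrow> 'a" where
  "Op K c q x = (\<Sum>k\<in>{1..K}. zsmul (c k) (\<psi> k x - nsmul (k ^ q) x))"

definition vl :: "nat \<Rightarrow> (nat \<Rightarrow> int) \<Rightarrow> nat \<Rightarrow> nat \<Rightarrow> int" where
  "vl K c q t = (\<Sum>k\<in>{1..K}. c k * (int k ^ t - int k ^ q))"

lemma Op_add: "Op K c q (x + y) = Op K c q x + Op K c q y"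
  unfolding Op_def sum.distrib[symmetric]
  by (intro sum.cong refl) (simp add: add nsmul_plus' zsmul_plus[symmetric] algebra_simps)

lemma Op_psi: assumes "l > 0" shows "\<psi> l (Op K c q x) = Op K c q (\<psi> l x)"
  unfolding Op_def using assms
  by (simp add: psi_sum psi_zsmul psi_diff psi_nsmul comm)

lemma Op_F: assumes "i \<le> t" "t \<le> Suc j" "x \<in> F t" shows "Op K c q x \<in> F t"
  unfolding Op_def using assms
  by (intro subgroup_sum sub subgroup_zsmul subgroup_diff pres subgroup_nsmul) auto

lemma Op_split: "Op K c q x = (\<Sum>k\<in>{1..K}. zsmul (c k) (\<psi> k x - nsmul (k ^ t) x)) + zsmul (vl K c q t) x"
proof -
  have "zsmul (c k) (\<psi> k x - nsmul (k ^ q) x) = zsmul (c k) (\<psi> k x - nsmul (k ^ t) x) + zsmul (c k * (int k ^ t - int k ^ q)) x" for k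
  proof -
    have "zsmul (int k ^ t - int k ^ q) x = nsmul (k ^ t) x - nsmul (k ^ q) x"
      by (rule zsmul_repr) simp
    hence "zsmul (c k * (int k ^ t - int k ^ q)) x = zsmul (c k) (nsmul (k ^ t) x - nsmul (k ^ q) x)"
      by (simp add: zsmul_mult)
    thus ?thesis by (simp add: zsmul_plus[symmetric])
  qed
  hence "Op K c q x = (\<Sum>k\<in>{1..K}. zsmul (c k) (\<psi> k x - nsmul (k ^ t) x) + zsmul (c k * (int k ^ t - int k ^ q)) x)"
    unfolding Op_def by simp
  also have "\<dots> = (\<Sum>k\<in>{1..K}. zsmul (c k) (\<psi> k x - nsmul (k ^ t) x)) + zsmul (vl K c q t) x"
    unfolding sum.distrib vl_def zsmul_sum_scalar ..
  finally show ?thesis .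
qed

lemma Op_Fact: assumes "i \<le> t" "t \<le> j" "x \<in> F t"
  shows "Op K c q x - zsmul (vl K c q t) x \<in> F (Suc t)"
proof -
  have "Op K c q x - zsmul (vl K c q t) x = (\<Sum>k\<in>{1..K}. zsmul (c k) (\<psi> k x - nsmul (k ^ t) x))"
    by (subst Op_split[of _ _ _ _ t]) simp
  also have "\<dots> \<in> F (Suc t)" using assms
    by (intro subgroup_sum sub subgroup_zsmul act) auto
  finally show ?thesis .
qed

lemma Op_eigen: assumes "x \<in> eigen \<psi> t" shows "Op K c q x = zsmul (vl K c q t) x"
proof -
  have "(\<Sum>k\<in>{1..K}. zsmul (c k) (\<psi> k x - nsmul (k ^ t) x)) = 0"
    using assms unfolding eigen_def by (intro sum.neutral) auto
  thus ?thesis by (subst Op_split[of _ _ _ _ t]) simp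
qed

lemma vl_same[simp]: "vl K c q q = 0" by (simp add: vl_def)

end


context filt begin

definition KC :: "nat \<Rightarrow> nat \<Rightarrow> nat \<times> (nat \<Rightarrow> int)" where
  "KC p q = (SOME kc. vl (fst kc) (snd kc) q p = int (w (nat \<bar>int p - int q\<bar>)))"

lemma KC_ex: assumes "p \<noteq> q" shows "\<exists>kc. vl (fst kc) (snd kc) q p = int (w (nat \<bar>int p - int q\<bar>))"
proof (cases "q < p")
  case True
  obtain K c where Kc: "(\<Sum>k\<in>{1..K}. c k * (int k ^ q * (int k ^ (p - q) - 1))) = int (w (p - q))"
  proof -
    have "1 \<le> p - q" using True by simp
    from w_comb[OF this, of q] show ?thesis using that by blast
  qed
  have pw: "int k ^ q * (int k ^ (p - q) - 1) = int k ^ p - int k ^ q" for k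
  proof -
    have "int k ^ q * int k ^ (p - q) = int k ^ p" using True by (simp add: power_add[symmetric])
    thus ?thesis by (simp add: right_diff_distrib)
  qed
  have np: "nat \<bar>int p - int q\<bar> = p - q" using True by simp
  have "vl K c q p = int (w (nat \<bar>int p - int q\<bar>))" unfolding np vl_def using Kc by (simp add: pw)
  thus ?thesis by (intro exI[of _ "(K, c)"]) simp
next
  case False
  hence qp: "p < q" using assms by simp
  obtain K c where Kc: "(\<Sum>k\<in>{1..K}. c k * (int k ^ p * (int k ^ (q - p) - 1))) = int (w (q - p))"
  proof -
    have "1 \<le> q - p" using qp by simp
    from w_comb[OF this, of p] show ?thesis using that by blast
  qed
  have pw: "int k ^ p * (int k ^ (q - p) - 1) = int k ^ q - int k ^ p" for k
  proof -
    have "int k ^ p * int k ^ (q - p) = int k ^ q" using qp by (simp add: power_add[symmetric])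
    thus ?thesis by (simp add: right_diff_distrib)
  qed
  have np: "nat \<bar>int p - int q\<bar> = q - p" using qp by simp
  have "vl K (\<lambda>k. - c k) q p = (\<Sum>k\<in>{1..K}. c k * (int k ^ q - int k ^ p))"
    unfolding vl_def by (intro sum.cong) (simp_all add: algebra_simps)
  also have "\<dots> = int (w (nat \<bar>int p - int q\<bar>))" unfolding np using Kc by (simp add: pw)
  finally have "vl K (\<lambda>k. - c k) q p = int (w (nat \<bar>int p - int q\<bar>))" .
  thus ?thesis by (intro exI[of _ "(K, \<lambda>k. - c k)"]) simp
qed

definition E :: "nat \<Rightarrow> nat \<Rightarrow> 'a \<Rightarrow> 'a" where
  "E p q = Op (fst (KC p q)) (snd (KC p q)) q"

definition ev :: "nat \<Rightarrow> nat \<Rightarrow> nat \<Rightarrow> int" where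
  "ev p q t = vl (fst (KC p q)) (snd (KC p q)) q t"

lemma ev_pp: "p \<noteq> q \<Longrightarrow> ev p q p = int (w (nat \<bar>int p - int q\<bar>))"
  unfolding ev_def KC_def by (rule someI_ex) (rule KC_ex)

lemma ev_qq[simp]: "ev p q q = 0" by (simp add: ev_def)

lemma E_add: "E p q (x + y) = E p q x + E p q y" unfolding E_def by (rule Op_add)
lemma E_zsmul: "E p q (zsmul a x) = zsmul a (E p q x)" by (rule additive_zsmul) (rule E_add)
lemma E_diff: "E p q (x - y) = E p q x - E p q y" by (rule additive_diff) (rule E_add)
lemma E_psi: "l > 0 \<Longrightarrow> \<psi> l (E p q x) = E p q (\<psi> l x)" unfolding E_def by (rule Op_psi)
lemma E_F: "i \<le> t \<Longrightarrow> t \<le> Suc j \<Longrightarrow> x \<in> F t \<Longrightarrow> E p q x \<in> F t" unfolding E_def by (rule Op_F)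
lemma E_Fact: "i \<le> t \<Longrightarrow> t \<le> j \<Longrightarrow> x \<in> F t \<Longrightarrow> E p q x - zsmul (ev p q t) x \<in> F (Suc t)"
  unfolding E_def ev_def by (rule Op_Fact)
lemma E_eigen: "x \<in> eigen \<psi> t \<Longrightarrow> E p q x = zsmul (ev p q t) x"
  unfolding E_def ev_def by (rule Op_eigen)
lemma E_shift: "i \<le> q \<Longrightarrow> q \<le> j \<Longrightarrow> x \<in> F q \<Longrightarrow> E p q x \<in> F (Suc q)"
  using E_Fact[of q x p q] by simp

lemma Pm_add: "Pm (E p) r n (x + y) = Pm (E p) r n x + Pm (E p) r n y"
  by (induction n) (simp_all add: E_add)

lemma Pm_diff: "Pm (E p) r n (x - y) = Pm (E p) r n x - Pm (E p) r n y"
  by (rule additive_diff) (rule Pm_add)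

lemma Pm_nsmul: "Pm (E p) r n (nsmul m x) = nsmul m (Pm (E p) r n x)"
  by (rule additive_nsmul) (rule Pm_add)

lemma Pm_zsmul: "Pm (E p) r n (zsmul a x) = zsmul a (Pm (E p) r n x)"
  by (rule additive_zsmul) (rule Pm_add)

lemma Pm_zero: "Pm (E p) r n 0 = 0"
  by (rule additive_zero) (rule Pm_add)

lemma Pm_sum: "Pm (E p) r n (\<Sum>a\<in>A. g a) = (\<Sum>a\<in>A. Pm (E p) r n (g a))"
  by (rule additive_sum) (rule Pm_add)

lemma Pm_psi: "l > 0 \<Longrightarrow> \<psi> l (Pm (E p) r n x) = Pm (E p) r n (\<psi> l x)"
  by (induction n) (simp_all add: E_psi)

lemma Pm_F: "i \<le> t \<Longrightarrow> t \<le> Suc j \<Longrightarrow> x \<in> F t \<Longrightarrow> Pm (E p) r n x \<in> F t"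
  by (induction n) (simp_all add: E_F)

lemma Pm_eigen: assumes "x \<in> eigen \<psi> t"
  shows "Pm (E p) r n x = zsmul (\<Prod>q\<in>{r..<r+n}. ev p q t) x"
proof (induction n)
  case 0 thus ?case by simp
next
  case (Suc n)
  have "Pm (E p) r (Suc n) x = E p (r + n) (zsmul (\<Prod>q\<in>{r..<r+n}. ev p q t) x)" using Suc by simp
  also have "\<dots> = zsmul (ev p (r+n) t) (zsmul (\<Prod>q\<in>{r..<r+n}. ev p q t) x)"
    by (rule E_eigen) (rule eigen_zsmul[OF assms])
  also have "\<dots> = zsmul ((\<Prod>q\<in>{r..<r+n}. ev p q t) * ev p (r+n) t) x"
    by (simp add: zsmul_mult[symmetric] mult.commute)
  also have "(\<Prod>q\<in>{r..<r+n}. ev p q t) * ev p (r+n) t = (\<Prod>q\<in>{r..<r + Suc n}. ev p q t)"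
    by (simp add: prod.atLeastLessThan_Suc)
  finally show ?case .
qed

lemma Pm_Fact: assumes t: "i \<le> t" "t \<le> j" and x: "x \<in> F t"
  shows "Pm (E p) r n x - zsmul (\<Prod>q\<in>{r..<r+n}. ev p q t) x \<in> F (Suc t)"
proof (induction n)
  case 0 thus ?case using sub[of "Suc t"] t unfolding is_subgroup_def by simp
next
  case (Suc n)
  define PP where "PP = (\<Prod>q\<in>{r..<r+n}. ev p q t)"
  define y where "y = Pm (E p) r n x"
  have st: "is_subgroup (F (Suc t))" using sub t by simp
  have "Pm (E p) r (Suc n) x - zsmul (\<Prod>q\<in>{r..<r + Suc n}. ev p q t) x
      = E p (r+n) y - zsmul (PP * ev p (r+n) t) x"
    by (simp add: y_def PP_def prod.atLeastLessThan_Suc)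
  also have "\<dots> = zsmul PP (E p (r+n) x - zsmul (ev p (r+n) t) x) + E p (r+n) (y - zsmul PP x)"
    by (simp add: E_diff E_zsmul zsmul_diff zsmul_mult)
  also have "\<dots> \<in> F (Suc t)"
  proof -
    have "zsmul PP (E p (r+n) x - zsmul (ev p (r+n) t) x) \<in> F (Suc t)"
      using st E_Fact[OF t x] by (rule subgroup_zsmul)
    moreover have "E p (r+n) (y - zsmul PP x) \<in> F (Suc t)"
      using Suc t unfolding y_def PP_def by (intro E_F) auto
    ultimately show ?thesis using st unfolding is_subgroup_def by blast
  qed
  finally show ?case .
qed

lemma Pm_shift: assumes "i \<le> r" "r + n \<le> Suc j" "x \<in> F r"
  shows "Pm (E p) r n x \<in> F (r + n)"
  using assms(2)
proof (induction n)
  case 0 thus ?case using assms by simp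
next
  case (Suc n)
  hence "Pm (E p) r n x \<in> F (r + n)" by simp
  thus ?case using Suc.prems assms(1) by (simp add: E_shift)
qed

end


context filt begin

abbreviation wd :: "nat \<Rightarrow> nat \<Rightarrow> nat" where "wd p q \<equiv> w (nat \<bar>int p - int q\<bar>)"

lemma w0[simp]: "w 0 = 1" by (simp add: w_def)

lemma up: assumes x: "x \<in> eigen \<psi> p" and r0: "i \<le> r0" and C: "nsmul C x \<in> F r0"
  shows "r0 + n \<le> Suc j \<Longrightarrow> p \<notin> {r0..<r0+n} \<Longrightarrow>
    nsmul (C * (\<Prod>q\<in>{r0..<r0+n}. wd p q)) x \<in> F (r0 + n)"
proof (induction n)
  case 0 thus ?case using C by simp
next
  case (Suc n)
  define q where "q = r0 + n"
  define y where "y = nsmul (C * (\<Prod>q\<in>{r0..<r0+n}. wd p q)) x"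
  have yF: "y \<in> F q" using Suc unfolding y_def q_def by auto
  have ye: "y \<in> eigen \<psi> p" unfolding y_def by (rule eigen_nsmul[OF x])
  have qp: "p \<noteq> q" using Suc.prems q_def by auto
  have "E p q y \<in> F (Suc q)" using r0 Suc.prems yF unfolding q_def by (intro E_shift) auto
  moreover have "E p q y = nsmul (wd p q) y" using E_eigen[OF ye] ev_pp[OF qp] by simp
  moreover have "nsmul (wd p q) y = nsmul (C * (\<Prod>q\<in>{r0..<r0 + Suc n}. wd p q)) x"
    unfolding y_def nsmul_mult[symmetric] q_def by (simp add: prod.atLeastLessThan_Suc mult_ac)
  ultimately show ?case unfolding q_def by simp
qed

lemma nat_abs_le: "q \<le> p \<Longrightarrow> nat \<bar>int p - int q\<bar> = p - q" by simp

lemma prod_split: assumes p: "i \<le> p" "p \<le> j"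
  shows "(\<Prod>q\<in>{i..j}. wd p q) = (\<Prod>q\<in>{i..<p}. w (p - q)) * (\<Prod>q\<in>{Suc p..j}. wd p q)"
proof -
  have eq: "{i..j} = {i..<p} \<union> insert p {Suc p..j}" using p by auto
  have "(\<Prod>q\<in>{i..j}. wd p q) = (\<Prod>q\<in>{i..<p} \<union> insert p {Suc p..j}. wd p q)" by (simp only: eq)
  also have "\<dots> = (\<Prod>q\<in>{i..<p}. wd p q) * (\<Prod>q\<in>insert p {Suc p..j}. wd p q)"
    by (rule prod.union_disjoint) auto
  also have "(\<Prod>q\<in>insert p {Suc p..j}. wd p q) = (\<Prod>q\<in>{Suc p..j}. wd p q)"
    by (subst prod.insert) auto
  also have "(\<Prod>q\<in>{i..<p}. wd p q) = (\<Prod>q\<in>{i..<p}. w (p - q))"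
    by (intro prod.cong refl) (subst nat_abs_le, auto)
  finally show ?thesis .
qed

lemma cp_eq: "(\<Prod>q\<in>{i..<p}. w (p - q)) = (\<Prod>q\<in>{i..<p}. wd p q)"
  by (intro prod.cong refl) (subst nat_abs_le, auto)

lemma ev_prod: assumes "p \<notin> A" shows "(\<Prod>q\<in>A. ev p q p) = int (\<Prod>q\<in>A. wd p q)"
  unfolding of_nat_prod
proof (intro prod.cong refl)
  fix x assume "x \<in> A"
  hence "p \<noteq> x" using assms by auto
  thus "ev p x p = int (wd p x)" by (rule ev_pp)
qed

lemma coker: assumes p: "i \<le> p" "p \<le> j" and y: "y \<in> F p"
  shows "\<exists>z\<in>eigen \<psi> p. nsmul (\<Prod>q\<in>{i..j}. wd p q) y - nsmul (\<Prod>q\<in>{i..<p}. w (p - q)) z \<in> F (Suc p)"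
proof -
  define z where "z = Pm (E p) (Suc p) (j - p) y"
  have ze: "z \<in> eigen \<psi> p"
    unfolding eigen_def
  proof (intro CollectI allI impI)
    fix l :: nat assume l: "l > 0"
    have u: "\<psi> l y - nsmul (l ^ p) y \<in> F (Suc p)" using p l y by (intro act) auto
    have "Pm (E p) (Suc p) (j - p) (\<psi> l y - nsmul (l ^ p) y) \<in> F (Suc p + (j - p))"
      using p u by (intro Pm_shift) auto
    moreover have "Suc p + (j - p) = Suc j" using p by simp
    ultimately have "Pm (E p) (Suc p) (j - p) (\<psi> l y - nsmul (l ^ p) y) = 0" using bot by simp
    hence "\<psi> l z - nsmul (l ^ p) z = 0" unfolding z_def by (simp add: Pm_diff Pm_psi[OF l] Pm_nsmul)
    thus "\<psi> l z = nsmul (l ^ p) z" by simp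
  qed
  define V where "V = (\<Prod>q\<in>{Suc p..j}. wd p q)"
  define cp where "cp = (\<Prod>q\<in>{i..<p}. w (p - q))"
  have A: "z - zsmul (\<Prod>q\<in>{Suc p..<Suc p + (j-p)}. ev p q p) y \<in> F (Suc p)"
    unfolding z_def using p y by (intro Pm_Fact) auto
  have B: "{Suc p..<Suc p + (j-p)} = {Suc p..j}" using p by auto
  have Cc: "(\<Prod>q\<in>{Suc p..j}. ev p q p) = int V" unfolding V_def by (rule ev_prod) simp
  from A have "z - zsmul (int V) y \<in> F (Suc p)" by (simp only: B Cc)
  hence zV: "z - nsmul V y \<in> F (Suc p)" by simp
  have sg: "is_subgroup (F (Suc p))" using sub p by simp
  have "nsmul cp (z - nsmul V y) \<in> F (Suc p)" by (rule subgroup_nsmul[OF sg zV])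
  hence "- nsmul cp (z - nsmul V y) \<in> F (Suc p)" using sg unfolding is_subgroup_def by blast
  moreover have "- nsmul cp (z - nsmul V y) = nsmul (\<Prod>q\<in>{i..j}. wd p q) y - nsmul cp z"
    unfolding prod_split[OF p] V_def[symmetric] cp_def[symmetric]
    by (simp add: nsmul_diff nsmul_mult)
  ultimately have "nsmul (\<Prod>q\<in>{i..j}. wd p q) y - nsmul cp z \<in> F (Suc p)" by metis
  thus ?thesis using ze unfolding cp_def by blast
qed

lemma ker: assumes p: "i \<le> p" "p \<le> j" and x: "x \<in> eigen \<psi> p"
  and C: "nsmul (\<Prod>q\<in>{i..<p}. w (p - q)) x \<in> F (Suc p)"
  shows "nsmul (\<Prod>q\<in>{i..j}. wd p q) x = 0"
proof -
  have H: "nsmul ((\<Prod>q\<in>{i..<p}. w (p - q)) * (\<Prod>q\<in>{Suc p..<Suc p + (j - p)}. wd p q)) x \<in> F (Suc p + (j - p))"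
    using p C by (intro up[OF x]) auto
  have e1: "Suc p + (j - p) = Suc j" and B: "{Suc p..<Suc j} = {Suc p..j}" using p by auto
  from H have "nsmul ((\<Prod>q\<in>{i..<p}. w (p - q)) * (\<Prod>q\<in>{Suc p..j}. wd p q)) x \<in> {0}"
    by (simp only: e1 B bot)
  hence "nsmul ((\<Prod>q\<in>{i..<p}. w (p - q)) * (\<Prod>q\<in>{Suc p..j}. wd p q)) x = 0" by (simp only: singleton_iff)
  thus ?thesis by (simp only: prod_split[OF p])
qed

lemma into: assumes p: "i \<le> p" "p \<le> j" and x: "x \<in> eigen \<psi> p"
  shows "nsmul (\<Prod>q\<in>{i..<p}. w (p - q)) x \<in> F p"
proof -
  have "nsmul (1 * (\<Prod>q\<in>{i..<i + (p - i)}. wd p q)) x \<in> F (i + (p - i))"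
    using p by (intro up[OF x]) (auto simp: top)
  thus ?thesis using p by (simp add: cp_eq)
qed

end


context filt begin

definition Gs :: "(nat \<Rightarrow> 'a) set" where
  "Gs = {g. (\<forall>p\<in>{i..j}. g p \<in> eigen \<psi> p) \<and> (\<forall>p. p \<notin> {i..j} \<longrightarrow> g p = 0)}"

definition Dec :: "'a \<Rightarrow> bool" where
  "Dec y \<longleftrightarrow> (\<exists>g\<in>Gs. y = (\<Sum>p\<in>{i..j}. g p))"

lemma Dec_zero: "Dec 0"
  unfolding Dec_def Gs_def by (intro bexI[of _ "\<lambda>_. 0"]) (auto simp: eigen_zero)

lemma Dec_add: assumes "Dec x" "Dec y" shows "Dec (x + y)"
proof -
  obtain g h where g: "g \<in> Gs" "x = (\<Sum>p\<in>{i..j}. g p)" and h: "h \<in> Gs" "y = (\<Sum>p\<in>{i..j}. h p)"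
    using assms unfolding Dec_def by blast
  have "(\<lambda>p. g p + h p) \<in> Gs" using g h unfolding Gs_def by (auto simp: eigen_add)
  moreover have "x + y = (\<Sum>p\<in>{i..j}. g p + h p)" using g h by (simp add: sum.distrib)
  ultimately show ?thesis unfolding Dec_def by blast
qed

lemma Dec_eig: assumes p: "p \<in> {i..j}" and x: "x \<in> eigen \<psi> p" shows "Dec x"
proof -
  define g where "g q = (if q = p then x else 0)" for q
  have "g \<in> Gs" using p x unfolding Gs_def g_def by (auto simp: eigen_zero)
  moreover have "(\<Sum>q\<in>{i..j}. g q) = x" using p unfolding g_def by (simp add: sum.delta)
  ultimately show ?thesis unfolding Dec_def by metis
qed

abbreviation NN :: "nat \<Rightarrow> nat" where "NN p \<equiv> (\<Prod>q\<in>{i..j}. wd p q)"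

lemma dec_all: "r + n = Suc j \<Longrightarrow> i \<le> r \<Longrightarrow> y \<in> F r \<Longrightarrow> Dec (nsmul (\<Prod>p\<in>{r..j}. NN p) y)"
proof (induction n arbitrary: r y)
  case 0
  hence "y = 0" using bot by simp
  thus ?case by (simp add: Dec_zero)
next
  case (Suc n)
  hence r: "i \<le> r" "r \<le> j" by auto
  obtain z where z: "z \<in> eigen \<psi> r" and y': "nsmul (NN r) y - nsmul (\<Prod>q\<in>{i..<r}. w (r - q)) z \<in> F (Suc r)"
    using coker[OF r Suc.prems(3)] by blast
  define y' where "y' = nsmul (NN r) y - nsmul (\<Prod>q\<in>{i..<r}. w (r - q)) z"
  define M where "M = (\<Prod>p\<in>{Suc r..j}. NN p)"
  have D1: "Dec (nsmul M y')" unfolding M_def y'_def using Suc.prems r y' by (intro Suc.IH) auto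
  have D2: "Dec (nsmul (M * (\<Prod>q\<in>{i..<r}. w (r - q))) z)" using r z by (intro Dec_eig eigen_nsmul) auto
  have "(\<Prod>p\<in>{r..j}. NN p) = NN r * M" unfolding M_def using r by (simp add: prod.atLeast_Suc_atMost)
  hence "nsmul (\<Prod>p\<in>{r..j}. NN p) y = nsmul M y' + nsmul (M * (\<Prod>q\<in>{i..<r}. w (r - q))) z"
    unfolding y'_def by (simp add: nsmul_diff nsmul_mult mult.commute)
  thus ?case using Dec_add[OF D1 D2] by simp
qed

lemma ker2: assumes g: "g \<in> Gs" and s: "(\<Sum>p\<in>{i..j}. g p) = 0" and p': "i \<le> p'" "p' \<le> j"
  shows "nsmul (NN p') (g p') = 0"
proof -
  define Q where "Q x = Pm (E p') (Suc p') (j - p') (Pm (E p') i (p' - i) x)" for x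
  have Qe: "Q x = zsmul ((\<Prod>q\<in>{Suc p'..<Suc p' + (j - p')}. ev p' q t) * (\<Prod>q\<in>{i..<i + (p' - i)}. ev p' q t)) x"
    if x: "x \<in> eigen \<psi> t" for x t
  proof -
    have "Pm (E p') i (p' - i) x = zsmul (\<Prod>q\<in>{i..<i + (p' - i)}. ev p' q t) x" by (rule Pm_eigen[OF x])
    moreover have "zsmul (\<Prod>q\<in>{i..<i + (p' - i)}. ev p' q t) x \<in> eigen \<psi> t" by (rule eigen_zsmul[OF x])
    ultimately show ?thesis unfolding Q_def by (simp add: Pm_eigen zsmul_mult)
  qed
  have e1: "{Suc p'..<Suc p' + (j - p')} = {Suc p'..j}" "{i..<i + (p' - i)} = {i..<p'}" using p' by auto
  have Q0: "Q (g t) = 0" if t: "t \<in> {i..j}" "t \<noteq> p'" for t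
  proof -
    have ge: "g t \<in> eigen \<psi> t" using g t unfolding Gs_def by auto
    have Z: "(\<Prod>q\<in>{Suc p'..j}. ev p' q t) * (\<Prod>q\<in>{i..<p'}. ev p' q t) = 0"
    proof (cases "t < p'")
      case True
      hence "(\<Prod>q\<in>{i..<p'}. ev p' q t) = 0" using t by (intro prod_zero bexI[of _ t]) auto
      thus ?thesis by simp
    next
      case False
      hence "(\<Prod>q\<in>{Suc p'..j}. ev p' q t) = 0" using t by (intro prod_zero bexI[of _ t]) auto
      thus ?thesis by simp
    qed
    have "Q (g t) = zsmul ((\<Prod>q\<in>{Suc p'..j}. ev p' q t) * (\<Prod>q\<in>{i..<p'}. ev p' q t)) (g t)"
      using Qe[OF ge] unfolding e1 .
    also have "\<dots> = zsmul 0 (g t)" by (simp only: Z)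
    finally show ?thesis by simp
  qed
  have gp: "g p' \<in> eigen \<psi> p'" using g p' unfolding Gs_def by auto
  have "Q (g p') = zsmul (int ((\<Prod>q\<in>{Suc p'..j}. wd p' q) * (\<Prod>q\<in>{i..<p'}. wd p' q))) (g p')"
    using Qe[OF gp] unfolding e1 by (simp add: ev_prod)
  also have "\<dots> = nsmul ((\<Prod>q\<in>{Suc p'..j}. wd p' q) * (\<Prod>q\<in>{i..<p'}. wd p' q)) (g p')"
    by (rule zsmul_int)
  also have "(\<Prod>q\<in>{Suc p'..j}. wd p' q) * (\<Prod>q\<in>{i..<p'}. wd p' q) = NN p'"
    unfolding prod_split[OF p'] cp_eq by (rule mult.commute)
  finally have Qp: "Q (g p') = nsmul (NN p') (g p')" .
  have "Q (\<Sum>p\<in>{i..j}. g p) = (\<Sum>p\<in>{i..j}. Q (g p))" unfolding Q_def by (simp add: Pm_sum)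
  also have "\<dots> = Q (g p') + (\<Sum>p\<in>{i..j} - {p'}. Q (g p))" using p' by (subst sum.remove) auto
  also have "(\<Sum>p\<in>{i..j} - {p'}. Q (g p)) = 0" using Q0 by (intro sum.neutral) auto
  finally have "Q (\<Sum>p\<in>{i..j}. g p) = nsmul (NN p') (g p')" using Qp by simp
  moreover have "Q (\<Sum>p\<in>{i..j}. g p) = 0" unfolding s Q_def by (simp add: Pm_zero)
  ultimately show ?thesis by simp
qed

end


context filt begin

theorem main:
  "(\<forall>p\<in>{i..j}.
            (\<forall>x\<in>eigen \<psi> p. nsmul (\<Prod>q\<in>{i..<p}. w (p - q)) x \<in> F p) \<and>
            N_iso (\<Prod>q\<in>{i..j}. w (nat \<bar>int p - int q\<bar>)) (eigen \<psi> p) (F p) (F (Suc p))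
                  (nsmul (\<Prod>q\<in>{i..<p}. w (p - q))))
       \<and> N_iso (\<Prod>p\<in>{i..j}. \<Prod>q\<in>{i..j}. w (nat \<bar>int p - int q\<bar>))
               {g :: nat \<Rightarrow> 'a. (\<forall>p\<in>{i..j}. g p \<in> eigen \<psi> p) \<and> (\<forall>p. p \<notin> {i..j} \<longrightarrow> g p = 0)}
               UNIV {0} (\<lambda>g. \<Sum>p\<in>{i..j}. g p)"
proof -
  have A: "\<forall>p\<in>{i..j}.
            (\<forall>x\<in>eigen \<psi> p. nsmul (\<Prod>q\<in>{i..<p}. w (p - q)) x \<in> F p) \<and>
            N_iso (\<Prod>q\<in>{i..j}. w (nat \<bar>int p - int q\<bar>)) (eigen \<psi> p) (F p) (F (Suc p))
                  (nsmul (\<Prod>q\<in>{i..<p}. w (p - q)))"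
  proof
  fix p assume p: "p \<in> {i..j}"
  hence p': "i \<le> p" "p \<le> j" by auto
  have a1: "\<forall>x\<in>eigen \<psi> p. nsmul (\<Prod>q\<in>{i..<p}. w (p - q)) x \<in> F p"
    using into[OF p'] by blast
  have a2: "N_iso (\<Prod>q\<in>{i..j}. w (nat \<bar>int p - int q\<bar>)) (eigen \<psi> p) (F p) (F (Suc p))
                  (nsmul (\<Prod>q\<in>{i..<p}. w (p - q)))"
    unfolding N_iso_def
  proof (intro conjI ballI impI)
    fix x assume "x \<in> eigen \<psi> p"
    thus "nsmul (\<Prod>q\<in>{i..<p}. w (p - q)) x \<in> F p" by (rule into[OF p'])
  next
    fix x y :: 'a show "nsmul (\<Prod>q\<in>{i..<p}. w (p - q)) (x + y) = nsmul (\<Prod>q\<in>{i..<p}. w (p - q)) x + nsmul (\<Prod>q\<in>{i..<p}. w (p - q)) y"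
      by (rule nsmul_plus')
  next
    fix x assume "x \<in> eigen \<psi> p" "nsmul (\<Prod>q\<in>{i..<p}. w (p - q)) x \<in> F (Suc p)"
    thus "nsmul (\<Prod>q\<in>{i..j}. w (nat \<bar>int p - int q\<bar>)) x = 0" by (rule ker[OF p'])
  next
    fix y assume "y \<in> F p"
    thus "\<exists>x\<in>eigen \<psi> p. nsmul (\<Prod>q\<in>{i..j}. w (nat \<bar>int p - int q\<bar>)) y - nsmul (\<Prod>q\<in>{i..<p}. w (p - q)) x \<in> F (Suc p)"
      by (rule coker[OF p'])
  qed
  show "(\<forall>x\<in>eigen \<psi> p. nsmul (\<Prod>q\<in>{i..<p}. w (p - q)) x \<in> F p) \<and>
            N_iso (\<Prod>q\<in>{i..j}. w (nat \<bar>int p - int q\<bar>)) (eigen \<psi> p) (F p) (F (Suc p))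
                  (nsmul (\<Prod>q\<in>{i..<p}. w (p - q)))" using a1 a2 by blast
  qed
  have G: "{g :: nat \<Rightarrow> 'a. (\<forall>p\<in>{i..j}. g p \<in> eigen \<psi> p) \<and> (\<forall>p. p \<notin> {i..j} \<longrightarrow> g p = 0)} = Gs"
    by (simp add: Gs_def)
  have B: "N_iso (\<Prod>p\<in>{i..j}. \<Prod>q\<in>{i..j}. w (nat \<bar>int p - int q\<bar>))
               {g :: nat \<Rightarrow> 'a. (\<forall>p\<in>{i..j}. g p \<in> eigen \<psi> p) \<and> (\<forall>p. p \<notin> {i..j} \<longrightarrow> g p = 0)}
               UNIV {0} (\<lambda>g. \<Sum>p\<in>{i..j}. g p)"
    unfolding N_iso_def G
  proof (intro conjI ballI impI)
    fix g h :: "nat \<Rightarrow> 'a"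
    show "(\<Sum>p\<in>{i..j}. (g + h) p) = (\<Sum>p\<in>{i..j}. g p) + (\<Sum>p\<in>{i..j}. h p)"
      by (simp add: sum.distrib)
  next
    fix g assume g: "g \<in> Gs" and s: "(\<Sum>p\<in>{i..j}. g p) \<in> {0}"
    show "nsmul (\<Prod>p\<in>{i..j}. NN p) g = 0"
      unfolding nsmul_fun
    proof
      fix p'
      show "nsmul (\<Prod>p\<in>{i..j}. NN p) (g p') = 0 p'"
      proof (cases "p' \<in> {i..j}")
        case True
        have "NN p' dvd (\<Prod>p\<in>{i..j}. NN p)" using True by (intro dvd_prodI) auto
        then obtain k where k: "(\<Prod>p\<in>{i..j}. NN p) = NN p' * k" by blast
        have "nsmul (NN p') (g p') = 0" using g s True by (intro ker2) auto
        thus ?thesis unfolding k by (simp add: mult.commute[of "NN p'"] nsmul_mult)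
      next
        case False
        thus ?thesis using g unfolding Gs_def by simp
      qed
    qed
  next
    fix y :: 'a
    have "Dec (nsmul (\<Prod>p\<in>{i..j}. NN p) y)"
      using ij top by (intro dec_all[of i "Suc j - i"]) auto
    thus "\<exists>g\<in>Gs. nsmul (\<Prod>p\<in>{i..j}. NN p) y - (\<Sum>p\<in>{i..j}. g p) \<in> {0}"
      unfolding Dec_def by auto
  qed simp
  show ?thesis using A B by blast
qed

end

theorem proposition6:
  fixes \<psi> :: "nat \<Rightarrow> 'a::ab_group_add \<Rightarrow> 'a"
    and F :: "nat \<Rightarrow> 'a set"
    and i j :: nat
  assumes add: "\<And>k x y. k > 0 \<Longrightarrow> \<psi> k (x + y) = \<psi> k x + \<psi> k y"
    and comm: "\<And>k l x. k > 0 \<Longrightarrow> l > 0 \<Longrightarrow> \<psi> k (\<psi> l x) = \<psi> l (\<psi> k x)"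
    and ij: "i \<le> j"
    and top: "F i = UNIV"
    and bot: "F (Suc j) = {0}"
    and sub: "\<And>p. i \<le> p \<Longrightarrow> p \<le> Suc j \<Longrightarrow> is_subgroup (F p)"
    and decr: "\<And>p. i \<le> p \<Longrightarrow> p \<le> j \<Longrightarrow> F (Suc p) \<subseteq> F p"
    and pres: "\<And>p k x. i \<le> p \<Longrightarrow> p \<le> Suc j \<Longrightarrow> k > 0 \<Longrightarrow> x \<in> F p \<Longrightarrow> \<psi> k x \<in> F p"
    and act: "\<And>p k x. i \<le> p \<Longrightarrow> p \<le> j \<Longrightarrow> k > 0 \<Longrightarrow> x \<in> F p \<Longrightarrow>
                \<psi> k x - nsmul (k ^ p) x \<in> F (Suc p)"
  shows "(\<forall>p\<in>{i..j}.
            (\<forall>x\<in>eigen \<psi> p. nsmul (\<Prod>q\<in>{i..<p}. w (p - q)) x \<in> F p) \<and>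
            N_iso (\<Prod>q\<in>{i..j}. w (nat \<bar>int p - int q\<bar>)) (eigen \<psi> p) (F p) (F (Suc p))
                  (nsmul (\<Prod>q\<in>{i..<p}. w (p - q))))
       \<and> N_iso (\<Prod>p\<in>{i..j}. \<Prod>q\<in>{i..j}. w (nat \<bar>int p - int q\<bar>))
               {g :: nat \<Rightarrow> 'a. (\<forall>p\<in>{i..j}. g p \<in> eigen \<psi> p) \<and> (\<forall>p. p \<notin> {i..j} \<longrightarrow> g p = 0)}
               UNIV {0} (\<lambda>g. \<Sum>p\<in>{i..j}. g p)"
proof -
  interpret filt \<psi> F i j using assms by unfold_locales
  show ?thesis by (rule main)
qed


end
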